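(* Let $(N,+,* )$ be a finite planar nearring with $D(N)\ne\{0\}$. Write $(N,+)=N_1\oplus\cdots\oplus N_k$ as the direct sum of its Sylow $p$-subgroups (for distinct primes). Then there is an index $i$ such that for every $j\ne i$ every element of $N_j$ is a zero multiplier (so only the summand $N_i$ carries a nontrivial multiplication).
   Context: A (right) nearring $(N,+,* )$ is a set with a group $(N,+)$, a semigroup $(N,* )$, and right distributivity $(a+b)*c=a*c+b*c$. $N$ is planar if the relation $a\cong b$ ($x*a=x*b$ for all $x$) has at least $3$ classes and for all $a,b,c$ with $a\not\cong b$ the equation $x*a=x*b+c$ has a unique solution. The additive group of a finite planar nearring is nilpotent. The zero multipliers are the $n\in N$ with $x*n=0$ for all $x\in N$. $D(N)=\{n: n*(a+b)=n*a+n*b\ \forall a,b\}$. *)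

theory Defs
  imports Main "HOL-Computational_Algebra.Primes"
begin

definition nearring :: "('a::group_add \<Rightarrow> 'a \<Rightarrow> 'a) \<Rightarrow> bool" where
  "nearring mul \<longleftrightarrow>
     (\<forall>a b c. mul (mul a b) c = mul a (mul b c)) \<and>
     (\<forall>a b c. mul (a + b) c = mul a c + mul b c)"

definition mult_equiv :: "('a \<Rightarrow> 'a \<Rightarrow> 'a) \<Rightarrow> 'a \<Rightarrow> 'a \<Rightarrow> bool" where
  "mult_equiv mul a b \<longleftrightarrow> (\<forall>x. mul x a = mul x b)"

definition planar_nearring :: "('a::group_add \<Rightarrow> 'a \<Rightarrow> 'a) \<Rightarrow> bool" where
  "planar_nearring mul \<longleftrightarrow> nearring mul \<and>
     card (UNIV // {(a, b). mult_equiv mul a b}) \<ge> 3 \<and>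
     (\<forall>a b c. \<not> mult_equiv mul a b \<longrightarrow> (\<exists>!x. mul x a = mul x b + c))"

definition zero_multiplier :: "('a::group_add \<Rightarrow> 'a \<Rightarrow> 'a) \<Rightarrow> 'a \<Rightarrow> bool" where
  "zero_multiplier mul n \<longleftrightarrow> (\<forall>x. mul x n = 0)"

definition distributive_elements :: "('a::group_add \<Rightarrow> 'a \<Rightarrow> 'a) \<Rightarrow> 'a set" where
  "distributive_elements mul = {n. \<forall>a b. mul n (a + b) = mul n a + mul n b}"

definition add_subgroup :: "'a::group_add set \<Rightarrow> bool" where
  "add_subgroup S \<longleftrightarrow> 0 \<in> S \<and> (\<forall>a\<in>S. \<forall>b\<in>S. a + b \<in> S) \<and> (\<forall>a\<in>S. - a \<in> S)"

definition sylow_add :: "nat \<Rightarrow> 'a::{group_add,finite} set \<Rightarrow> bool" where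
  "sylow_add p S \<longleftrightarrow> prime p \<and> add_subgroup S \<and>
     card S = p ^ multiplicity p (card (UNIV :: 'a set))"

end

theory Submission
  imports Defs "HOL-Algebra.Multiplicative_Group"
begin

definition GA :: "'a::group_add set \<Rightarrow> 'a monoid" where
  "GA S = \<lparr>carrier = S, mult = (+), one = 0\<rparr>"

lemma GA_group:
  assumes "add_subgroup S"
  shows "group (GA S)"
proof (rule groupI)
  show "\<And>x y. x \<in> carrier (GA S) \<Longrightarrow> y \<in> carrier (GA S) \<Longrightarrow> x \<otimes>\<^bsub>GA S\<^esub> y \<in> carrier (GA S)"
    using assms by (auto simp: GA_def add_subgroup_def)
  show "\<one>\<^bsub>GA S\<^esub> \<in> carrier (GA S)" using assms by (auto simp: GA_def add_subgroup_def)
  show "\<And>x y z. x \<in> carrier (GA S) \<Longrightarrow> y \<in> carrier (GA S) \<Longrightarrow> z \<in> carrier (GA S) \<Longrightarrow>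
     x \<otimes>\<^bsub>GA S\<^esub> y \<otimes>\<^bsub>GA S\<^esub> z = x \<otimes>\<^bsub>GA S\<^esub> (y \<otimes>\<^bsub>GA S\<^esub> z)"
    by (simp add: GA_def add.assoc)
  show "\<And>x. x \<in> carrier (GA S) \<Longrightarrow> \<one>\<^bsub>GA S\<^esub> \<otimes>\<^bsub>GA S\<^esub> x = x" by (simp add: GA_def)
  show "\<And>x. x \<in> carrier (GA S) \<Longrightarrow> \<exists>y\<in>carrier (GA S). y \<otimes>\<^bsub>GA S\<^esub> x = \<one>\<^bsub>GA S\<^esub>"
  proof -
    fix x assume "x \<in> carrier (GA S)"
    then show "\<exists>y\<in>carrier (GA S). y \<otimes>\<^bsub>GA S\<^esub> x = \<one>\<^bsub>GA S\<^esub>"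
      using assms by (auto simp: GA_def add_subgroup_def intro!: bexI[of _ "- x"])
  qed
qed

lemma GA_pow_indep: "pow (GA S) x (n::nat) = pow (GA T) x n"
  by (induction n) (simp_all add: GA_def)

lemma GA_pow_Suc: "pow (GA S) x (Suc n) = pow (GA S) x n + x"
  by (simp add: GA_def)

lemma GA_pow_0: "pow (GA S) x (0::nat) = 0"
  by (simp add: GA_def)

lemma GA_pow_zero: "pow (GA S) (0::'a::group_add) (n::nat) = 0"
  by (induction n) (simp_all add: GA_def)

lemma hom_pow:
  assumes "\<And>a b. f (a + b) = f a + f b"
  shows "f (pow (GA S) x (n::nat)) = pow (GA S) (f x) n"
proof (induction n)
  case 0
  have "f 0 + f 0 = f 0 + 0" using assms[of 0 0] by (metis add_0_right)
  then have "f 0 = 0" by (metis add_left_cancel)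
  then show ?case by (simp add: GA_def)
next
  case (Suc n) then show ?case by (simp add: GA_def assms)
qed

lemma GA_card_pow:
  fixes S :: "'a::{group_add,finite} set"
  assumes "add_subgroup S" "x \<in> S"
  shows "pow (GA UNIV) x (card S) = 0"
proof -
  interpret group "GA S" by (rule GA_group[OF assms(1)])
  have "pow (GA S) x (order (GA S)) = \<one>\<^bsub>GA S\<^esub>"
    by (rule pow_order_eq_1) (simp add: GA_def assms)
  then show ?thesis by (simp add: order_def GA_def GA_pow_indep[of S x _ UNIV, unfolded GA_def])
qed

theorem mainTheorem7:
  fixes mul :: "'a::{group_add,finite} \<Rightarrow> 'a \<Rightarrow> 'a"
  assumes "planar_nearring mul"
    and "distributive_elements mul \<noteq> {0}"
  shows "\<exists>p. prime p \<and> p dvd card (UNIV :: 'a set) \<and>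
           (\<forall>q S. sylow_add q S \<and> q \<noteq> p \<longrightarrow> (\<forall>n\<in>S. zero_multiplier mul n))"
proof -
  have assoc: "\<And>a b c. mul (mul a b) c = mul a (mul b c)"
    and rdist: "\<And>a b c. mul (a + b) c = mul a c + mul b c"
    using assms(1) by (auto simp: planar_nearring_def nearring_def)
  have card3: "card (UNIV // {(a, b). mult_equiv mul a b}) \<ge> 3"
    and planar: "\<And>a b c. \<not> mult_equiv mul a b \<Longrightarrow> (\<exists>!x. mul x a = mul x b + c)"
    using assms(1) by (auto simp: planar_nearring_def)
  have z0: "\<And>c. mul 0 c = 0"
  proof -
    fix c
    have "mul 0 c + mul 0 c = mul 0 c + 0" using rdist[of 0 0 c] by (metis add_0_right)
    then show "mul 0 c = 0" by (metis add_left_cancel)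
  qed
  obtain a b where ab: "\<not> mult_equiv mul a b"
  proof (rule ccontr)
    assume "\<not> thesis"
    with that have all: "\<And>a b. mult_equiv mul a b" by blast
    then have "{(a, b). mult_equiv mul a b} = UNIV \<times> UNIV" by auto
    then have "UNIV // {(a, b). mult_equiv mul a b} = {UNIV}"
      by (auto simp: quotient_def)
    with card3 show False by simp
  qed
  have x0: "\<And>x. mul x 0 = 0"
  proof -
    fix x
    define c where "c = mul x 0"
    have ca: "mul c a = c" unfolding c_def by (simp add: assoc z0)
    have cb: "mul c b = c" unfolding c_def by (simp add: assoc z0)
    from planar[OF ab, of 0] obtain z where "\<And>y. mul y a = mul y b + 0 \<Longrightarrow> y = z" by blast
    moreover have "mul 0 a = mul 0 b + 0" by (simp add: z0)
    moreover have "mul c a = mul c b + 0" by (simp add: ca cb)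
    ultimately show "mul x 0 = 0" unfolding c_def[symmetric] by metis
  qed
  have inj: "\<And>n u v. (\<exists>x. mul x n \<noteq> 0) \<Longrightarrow> mul u n = mul v n \<Longrightarrow> u = v"
  proof -
    fix n u v assume h: "\<exists>x. mul x n \<noteq> 0" and e: "mul u n = mul v n"
    have "\<not> mult_equiv mul n 0" using h by (auto simp: mult_equiv_def x0)
    from planar[OF this, of "mul u n"] obtain z where "\<And>y. mul y n = mul y 0 + mul u n \<Longrightarrow> y = z" by blast
    then show "u = v" using e by (metis x0 add_0)
  qed
  have "0 \<in> distributive_elements mul" by (simp add: distributive_elements_def z0)
  then obtain d where dD: "d \<in> distributive_elements mul" and d0: "d \<noteq> 0"
    using assms(2) by blast
  have ldist: "\<And>a b. mul d (a + b) = mul d a + mul d b"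
    using dD by (simp add: distributive_elements_def)
  have kerA: "\<And>w. mul d w = 0 \<Longrightarrow> zero_multiplier mul w"
  proof -
    fix w assume "mul d w = 0"
    show "zero_multiplier mul w"
    proof (rule ccontr)
      assume "\<not> zero_multiplier mul w"
      then have "\<exists>x. mul x w \<noteq> 0" by (auto simp: zero_multiplier_def)
      from inj[OF this, of d 0] \<open>mul d w = 0\<close> d0 show False by (simp add: z0)
    qed
  qed
  obtain y0 where y0: "\<exists>x. mul x y0 \<noteq> 0"
  proof -
    from ab obtain x where "mul x a \<noteq> mul x b" by (auto simp: mult_equiv_def)
    then have "mul x a \<noteq> 0 \<or> mul x b \<noteq> 0" by auto
    then show ?thesis using that by blast
  qed
  define G :: "'a monoid" where "G = GA UNIV"
  interpret G: group G unfolding G_def by (rule GA_group) (simp add: add_subgroup_def)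
  have one: "\<one>\<^bsub>G\<^esub> = 0" by (simp add: G_def GA_def)
  have carr: "carrier G = UNIV" by (simp add: G_def GA_def)
  have rhom: "\<And>y x n. mul (pow G x (n::nat)) y = pow G (mul x y) n"
    unfolding G_def by (rule hom_pow) (simp add: rdist)
  have lhom: "\<And>x n. mul d (pow G x (n::nat)) = pow G (mul d x) n"
    unfolding G_def by (rule hom_pow) (simp add: ldist)
  define m where "m = G.ord d"
  have mdvd: "m dvd card (UNIV::'a set)"
    using G.ord_dvd_group_order[of d] by (simp add: m_def carr order_def)
  have mpos: "m > 0" proof -
    have "card (UNIV::'a set) > 0" by (simp add: card_gt_0_iff)
    then show ?thesis using mdvd by (cases m) auto
  qed
  have m1: "m \<noteq> 1" using G.ord_eq_1[of d] d0 by (simp add: m_def carr one)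
  obtain p where p: "prime p" "p dvd m" using prime_factor_nat[OF m1] by blast
  define k where "k = m div p"
  have mk: "m = k * p" using p by (simp add: k_def)
  have k0: "k > 0" using mk mpos by (simp)
  have km: "k < m" using mk k0 prime_gt_1_nat[OF p(1)] by simp
  have dk: "pow G d k \<noteq> 0"
    using G.pow_eq_id[of d k] km k0 by (simp add: carr one m_def[symmetric]) (metis nat_dvd_not_less)
  have e1: "mul (pow G d k) y0 \<noteq> 0"
  proof
    assume "mul (pow G d k) y0 = 0"
    then have "mul (pow G d k) y0 = mul 0 y0" by (simp add: z0)
    from inj[OF y0 this] dk show False by simp
  qed
  define z where "z = pow G y0 k"
  have e2: "mul (pow G d k) y0 = mul d z"
    unfolding z_def by (simp add: rhom lhom)
  have zinj: "\<exists>x. mul x z \<noteq> 0" using e1 e2 by metis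
  have "mul (pow G d p) z = pow G (mul d z) p" by (rule rhom)
  also have "\<dots> = pow G (mul (pow G d k) y0) p" by (simp add: e2)
  also have "\<dots> = mul (pow G (pow G d k) p) y0" by (simp add: rhom)
  also have "\<dots> = mul (pow G d m) y0" by (simp add: G.nat_pow_pow carr mk)
  also have "\<dots> = 0" using G.pow_ord_eq_1[of d] by (simp add: m_def carr one z0)
  finally have "mul (pow G d p) z = mul 0 z" by (simp add: z0)
  from inj[OF zinj this] have dp: "pow G d p = 0" .
  have "m dvd p" using G.pow_eq_id[of d p] dp by (simp add: carr one m_def)
  then have mp: "m = p" using m1 p(1) by (metis prime_nat_iff)
  show ?thesis
  proof (intro exI conjI allI impI ballI)
    show "prime p" by fact
    show "p dvd card (UNIV :: 'a set)" using mdvd mp by simp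
    fix q :: nat and S :: "'a set" and n :: 'a assume qS: "sylow_add q S \<and> q \<noteq> p" and nS: "n \<in> S"
    define u where "u = mul d n"
    have up: "pow G u p = 0" unfolding u_def by (simp add: rhom[symmetric] dp z0)
    have sub: "add_subgroup S" and q: "prime q"
      and cS: "card S = q ^ multiplicity q (card (UNIV :: 'a set))"
      using qS by (auto simp: sylow_add_def)
    have "pow G n (card S) = 0" unfolding G_def by (rule GA_card_pow[OF sub nS])
    moreover have md0: "mul d 0 = 0" using lhom[of 0 0] by (simp add: G_def GA_def)
    moreover have "pow G u (card S) = mul d (pow G n (card S))" by (simp add: u_def lhom)
    ultimately have uS: "pow G u (card S) = 0" by simp
    have "G.ord u dvd p" using G.pow_eq_id[of u p] up by (simp add: carr one)
    moreover have "G.ord u dvd card S" using G.pow_eq_id[of u "card S"] uS by (simp add: carr one)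
    moreover have "coprime p (card S)" unfolding cS
      using qS q p(1) primes_coprime[of p q] by (simp add: coprime_power_right_iff)
    ultimately have "G.ord u = 1" using coprime_common_divisor_nat by blast
    then have "u = 0" using G.ord_eq_1[of u] by (simp add: carr one)
    then show "zero_multiplier mul n" using kerA u_def by simp
  qed
qed

end
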